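(* Let $A\in\mathbb{R}^{n\times n}$ and $B\in\mathbb{R}^{r\times r}$ be symmetric positive semidefinite with $r\le n$, with eigendecompositions $A=\sum_{i=1}^{n}s_{i}u_{i}u_{i}^{T}$, $\sum_{i=1}^{n}u_{i}u_{i}^{T}=I_{n}$, $s_{1}\ge\cdots\ge s_{n}\ge0$, and $B=\sum_{i=1}^{r}d_{i}v_{i}v_{i}^{T}$, $\sum_{i=1}^{r}v_{i}v_{i}^{T}=I_{r}$, $0\le d_{1}\le\cdots\le d_{r}$. Then $$\min_{Y\in\mathbb{R}^{n\times r}}\left\{\|A-YY^{T}\|_{F}^{2}+2\langle B,Y^{T}Y\rangle\right\}=\sum_{i=1}^{n}s_{i}^{2}-\sum_{i=1}^{r}[(s_{i}-d_{i})_{+}]^{2},$$ with a minimizer $Y^{\star}=\sum_{i=1}^{r}u_{i}v_{i}^{T}\sqrt{(s_{i}-d_{i})_{+}}$.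
   Context: $\langle A,B\rangle=\mathrm{tr}(A^{T}B)$ and $x_{+}=\max\{0,x\}$. *)

theory Defs
  imports "HOL-Analysis.Analysis"
begin

definition pos_part :: "real \<Rightarrow> real" where
  "pos_part x = max 0 x"

definition outer :: "real ^ 'm \<Rightarrow> real ^ 'k \<Rightarrow> real ^ 'k ^ 'm" where
  "outer u v = (\<chi> i j. u $ i * v $ j)"

definition frob_inner :: "real ^ 'k ^ 'm \<Rightarrow> real ^ 'k ^ 'm \<Rightarrow> real" where
  "frob_inner A B = trace (transpose A ** B)"

definition frob_norm :: "real ^ 'k ^ 'm \<Rightarrow> real" where
  "frob_norm A = sqrt (\<Sum>i\<in>UNIV. \<Sum>j\<in>UNIV. (A $ i $ j)\<^sup>2)"

definition sym_psd :: "real ^ 'n ^ 'n \<Rightarrow> bool" where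
  "sym_psd A \<longleftrightarrow> transpose A = A \<and> (\<forall>x. 0 \<le> x \<bullet> (A *v x))"

end

theory Submission
  imports Defs
begin


definition hh :: "real \<Rightarrow> real" where "hh t = (pos_part t)\<^sup>2"

lemma hh_nonneg: "0 \<le> hh t" by (simp add: hh_def)

lemma hh_mono: "x \<le> y \<Longrightarrow> hh x \<le> hh y"
  by (auto simp: hh_def pos_part_def max_def intro: power_mono)

lemma hh_Q:
  assumes D: "0 \<le> D" and ac: "a \<le> c"
  shows "hh (a + D) - hh a \<le> hh (c + D) - hh c"
proof -
  have Q0: "0 \<le> hh (z + D) - hh z" for z using hh_mono[of z "z + D"] D by simp
  show ?thesis
  proof (cases "a + D \<le> 0")
    case True
    then have "hh (a + D) = 0" "hh a = 0" using D by (auto simp: hh_def pos_part_def)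
    then show ?thesis using Q0[of c] by simp
  next
    case a2: False
    show ?thesis
    proof (cases "a \<le> 0")
      case True
      then have ha: "hh (a + D) - hh a = (a + D)\<^sup>2" using a2 by (simp add: hh_def pos_part_def)
      show ?thesis
      proof (cases "c \<le> 0")
        case True
        then have "hh (c + D) - hh c = (c + D)\<^sup>2" using a2 ac by (simp add: hh_def pos_part_def)
        moreover have "(a + D)\<^sup>2 \<le> (c + D)\<^sup>2" using a2 ac by (intro power_mono) auto
        ultimately show ?thesis using ha by simp
      next
        case False
        then have "hh (c + D) - hh c = 2 * c * D + D\<^sup>2" using D
          by (simp add: hh_def pos_part_def power2_eq_square algebra_simps)
        moreover have "(a + D)\<^sup>2 \<le> D\<^sup>2" using a2 True by (intro power_mono) auto
        moreover have "0 \<le> c * D" using False D by simp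
        ultimately show ?thesis using ha by simp
      qed
    next
      case False
      then have "hh (a + D) - hh a = 2 * a * D + D\<^sup>2" using D
        by (simp add: hh_def pos_part_def power2_eq_square algebra_simps)
      moreover have "hh (c + D) - hh c = 2 * c * D + D\<^sup>2" using D False ac
        by (simp add: hh_def pos_part_def power2_eq_square algebra_simps)
      moreover have "a * D \<le> c * D" using ac D by (simp add: mult_right_mono)
      ultimately show ?thesis by simp
    qed
  qed
qed

lemma hh_sup:
  assumes "e \<le> f" "x \<le> y"
  shows "hh (x - e) - hh (x - f) \<le> hh (y - e) - hh (y - f)"
  using hh_Q[of "f - e" "x - f" "y - f"] assms by (simp add: algebra_simps)

lemma quad_bound: "0 \<le> (mu::real) \<Longrightarrow> mu\<^sup>2 - 2 * mu * t \<ge> - hh t"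
proof (cases "t \<le> 0")
  case True
  assume m: "0 \<le> mu" then have "mu * t \<le> 0" using True by (simp add: mult_nonneg_nonpos)
  moreover have "hh t = 0" using True by (simp add: hh_def pos_part_def)
  moreover have "0 \<le> mu\<^sup>2" by simp
  ultimately show ?thesis by linarith
next
  case False
  then have "hh t = t\<^sup>2" by (simp add: hh_def pos_part_def)
  moreover have "0 \<le> (mu - t)\<^sup>2" by simp
  ultimately show ?thesis by (simp add: power2_eq_square algebra_simps)
qed


lemma tele: "k \<le> K \<Longrightarrow> (\<Sum>m\<in>{k..<K}. (f m - f (Suc m))) = f k - (f K :: real)"
  using sum_Suc_diff'[of k K f] by (simp add: sum_negf[symmetric] sum_subtractf)

locale dualsetup =
  fixes N R :: nat and s d :: "nat \<Rightarrow> real"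
  assumes R0: "0 < R" and RN: "R \<le> N"
    and s_dec: "\<And>i j. i \<le> j \<Longrightarrow> j < N \<Longrightarrow> s j \<le> s i"
    and s_nonneg: "\<And>i. i < N \<Longrightarrow> 0 \<le> s i"
    and d_inc: "\<And>i j. i \<le> j \<Longrightarrow> j < R \<Longrightarrow> d i \<le> d j"
begin

definition "sig = (if R < N then s R else 0)"
definition "dl m = hh (s (Suc m) - d m) - hh (s (Suc m) - d (Suc m))"
definition "bb k = hh (sig - d (R - 1)) + (\<Sum>m\<in>{k..<R-1}. dl m)"
definition "aa i = (if i < R then hh (s i - d i) - bb i else 0)"

lemma LB:
  assumes "k \<le> K" "K < R" "\<And>m. k \<le> m \<Longrightarrow> m < K \<Longrightarrow> x \<le> s (Suc m)"
  shows "hh (x - d k) - hh (x - d K) \<le> (\<Sum>m\<in>{k..<K}. dl m)"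
proof -
  have "(\<Sum>m\<in>{k..<K}. hh (x - d m) - hh (x - d (Suc m))) \<le> (\<Sum>m\<in>{k..<K}. dl m)"
    unfolding dl_def using assms by (intro sum_mono hh_sup d_inc) auto
  then show ?thesis using tele[OF assms(1), of "\<lambda>m. hh (x - d m)"] by simp
qed

lemma UB:
  assumes "k \<le> K" "K < R" "\<And>m. k \<le> m \<Longrightarrow> m < K \<Longrightarrow> s (Suc m) \<le> x"
  shows "(\<Sum>m\<in>{k..<K}. dl m) \<le> hh (x - d k) - hh (x - d K)"
proof -
  have "(\<Sum>m\<in>{k..<K}. dl m) \<le> (\<Sum>m\<in>{k..<K}. hh (x - d m) - hh (x - d (Suc m)))"
    unfolding dl_def using assms by (intro sum_mono hh_sup d_inc) auto
  then show ?thesis using tele[OF assms(1), of "\<lambda>m. hh (x - d m)"] by simp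
qed

lemma sig_le: "i < R \<Longrightarrow> sig \<le> s i"
  unfolding sig_def using s_dec s_nonneg RN by auto

lemma bb_ge: "k < R \<Longrightarrow> hh (sig - d k) \<le> bb k"
  using LB[of k "R - 1" sig] sig_le unfolding bb_def by force

lemma bb_nonneg: "k < R \<Longrightarrow> 0 \<le> bb k"
  using bb_ge hh_nonneg order_trans by blast

lemma aa_nonneg: "0 \<le> aa i"
proof (cases "i < R")
  case True
  have "bb i \<le> hh (sig - d (R - 1)) + (hh (s i - d i) - hh (s i - d (R - 1)))"
    unfolding bb_def using True s_dec RN by (intro add_left_mono UB) auto
  moreover have "hh (sig - d (R - 1)) \<le> hh (s i - d (R - 1))"
    using sig_le[OF True] by (intro hh_mono) simp
  ultimately show ?thesis using True unfolding aa_def by simp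
qed (simp add: aa_def)

lemma bb_split: "k \<le> i \<Longrightarrow> i < R \<Longrightarrow> bb k = bb i + (\<Sum>m\<in>{k..<i}. dl m)"
proof -
  assume a: "k \<le> i" "i < R"
  have "{k..<R-1} = {k..<i} \<union> {i..<R-1}" using a by auto
  then have "(\<Sum>m\<in>{k..<R-1}. dl m) = (\<Sum>m\<in>{k..<i}. dl m) + (\<Sum>m\<in>{i..<R-1}. dl m)"
    by (simp add: sum.union_disjoint ivl_disj_int)
  then show ?thesis unfolding bb_def by simp
qed

lemma dual: "i < N \<Longrightarrow> k < R \<Longrightarrow> hh (s i - d k) \<le> aa i + bb k"
proof -
  assume i: "i < N" and k: "k < R"
  show ?thesis
  proof (cases "i < R")
    case iR: True
    show ?thesis
    proof (cases "k \<le> i")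
      case True
      have "hh (s i - d k) - hh (s i - d i) \<le> (\<Sum>m\<in>{k..<i}. dl m)"
        using True iR i by (intro LB s_dec) auto
      then show ?thesis using bb_split[OF True iR] iR unfolding aa_def by simp
    next
      case False
      have "(\<Sum>m\<in>{i..<k}. dl m) \<le> hh (s i - d i) - hh (s i - d k)"
        using False k i RN by (intro UB s_dec) auto
      then show ?thesis using bb_split[of i k] False k iR unfolding aa_def by simp
    qed
  next
    case False
    then have "R < N" "s i \<le> sig" using i s_dec unfolding sig_def by auto
    then have "hh (s i - d k) \<le> hh (sig - d k)" by (intro hh_mono) simp
    then show ?thesis using bb_ge[OF k] False unfolding aa_def by simp
  qed
qed

lemma dual_sum: "(\<Sum>i<N. aa i) + (\<Sum>k<R. bb k) = (\<Sum>i<R. hh (s i - d i))"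
proof -
  have "(\<Sum>i<N. aa i) = (\<Sum>i<R. aa i)"
    using RN by (intro sum.mono_neutral_right) (auto simp: aa_def)
  also have "\<dots> = (\<Sum>i<R. hh (s i - d i)) - (\<Sum>i<R. bb i)"
    by (simp add: aa_def sum_subtractf)
  finally show ?thesis by simp
qed

end



context dualsetup begin

lemma term_bound:
  fixes mu :: real and p q :: "nat \<Rightarrow> real"
  assumes mu: "0 \<le> mu" and p: "\<And>i. 0 \<le> p i" and q: "\<And>k. 0 \<le> q k"
    and ps: "(\<Sum>i<N. p i) = mu" and qs: "(\<Sum>k<R. q k) = 1"
  shows "mu\<^sup>2 - 2 * (\<Sum>i<N. s i * p i) + 2 * mu * (\<Sum>k<R. d k * q k)
         \<ge> - (\<Sum>i<N. p i / mu * aa i) - (\<Sum>k<R. q k * bb k)"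
proof (cases "mu = 0")
  case True
  then have "\<forall>i\<in>{..<N}. p i = 0" using ps p by (subst sum_nonneg_eq_0_iff[symmetric]) auto
  then have "(\<Sum>i<N. s i * p i) = 0" by simp
  moreover have "0 \<le> (\<Sum>k<R. q k * bb k)" using q bb_nonneg by (intro sum_nonneg) auto
  ultimately show ?thesis using True by simp
next
  case False
  then have mu0: "0 < mu" using mu by simp
  have inner: "(\<Sum>k<R. p i * q k * (mu\<^sup>2 - 2 * mu * (s i - d k)))
      = p i * mu\<^sup>2 - 2 * mu * (s i * p i) + 2 * mu * p i * (\<Sum>k<R. d k * q k)" for i
  proof -
    have "(\<Sum>k<R. p i * q k * (mu\<^sup>2 - 2 * mu * (s i - d k)))
      = (\<Sum>k<R. (p i * mu\<^sup>2) * q k - (2 * mu * (s i * p i)) * q k + (2 * mu * p i) * (d k * q k))"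
      by (rule sum.cong) (simp_all add: algebra_simps)
    also have "\<dots> = (p i * mu\<^sup>2) * (\<Sum>k<R. q k) - (2 * mu * (s i * p i)) * (\<Sum>k<R. q k)
        + (2 * mu * p i) * (\<Sum>k<R. d k * q k)"
      by (simp only: sum.distrib sum_subtractf sum_distrib_left)
    finally show ?thesis using qs by simp
  qed
  have key: "mu * (mu\<^sup>2 - 2 * (\<Sum>i<N. s i * p i) + 2 * mu * (\<Sum>k<R. d k * q k))
     = (\<Sum>i<N. \<Sum>k<R. p i * q k * (mu\<^sup>2 - 2 * mu * (s i - d k)))"
  proof -
    have "(\<Sum>i<N. \<Sum>k<R. p i * q k * (mu\<^sup>2 - 2 * mu * (s i - d k)))
      = (\<Sum>i<N. p i * mu\<^sup>2 - 2 * mu * (s i * p i) + 2 * mu * p i * (\<Sum>k<R. d k * q k))"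
      using inner by simp
    also have "\<dots> = (\<Sum>i<N. p i) * mu\<^sup>2 - 2 * mu * (\<Sum>i<N. s i * p i)
         + 2 * mu * (\<Sum>i<N. p i) * (\<Sum>k<R. d k * q k)"
    proof -
      have h1: "(\<Sum>i<N. p i * mu\<^sup>2) = (\<Sum>i<N. p i) * mu\<^sup>2" by (simp add: sum_distrib_right)
      have h2: "(\<Sum>i<N. 2 * mu * (s i * p i)) = 2 * mu * (\<Sum>i<N. s i * p i)" by (simp add: sum_distrib_left)
      have h3: "(\<Sum>i<N. 2 * mu * p i * (\<Sum>k<R. d k * q k)) = 2 * mu * (\<Sum>i<N. p i) * (\<Sum>k<R. d k * q k)"
        by (simp only: sum_distrib_right[symmetric] sum_distrib_left[symmetric])
      show ?thesis by (simp only: sum.distrib sum_subtractf h1 h2 h3)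
    qed
    finally show ?thesis using ps by (simp add: algebra_simps power2_eq_square)
  qed
  have "(\<Sum>i<N. \<Sum>k<R. p i * q k * (- (aa i + bb k)))
      \<le> (\<Sum>i<N. \<Sum>k<R. p i * q k * (mu\<^sup>2 - 2 * mu * (s i - d k)))"
  proof (intro sum_mono mult_left_mono)
    fix i k assume "i \<in> {..<N}" "k \<in> {..<R}"
    then show "- (aa i + bb k) \<le> mu\<^sup>2 - 2 * mu * (s i - d k)"
      using dual[of i k] quad_bound[OF mu, of "s i - d k"] by simp
  qed (use p q in auto)
  moreover have "(\<Sum>i<N. \<Sum>k<R. p i * q k * (- (aa i + bb k)))
      = - (\<Sum>i<N. p i * aa i) - mu * (\<Sum>k<R. q k * bb k)"
  proof -
    have "(\<Sum>i<N. \<Sum>k<R. p i * q k * (- (aa i + bb k)))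
       = (\<Sum>i<N. - (p i * aa i) * (\<Sum>k<R. q k) - p i * (\<Sum>k<R. q k * bb k))"
      by (simp add: algebra_simps sum.distrib sum_distrib_left sum_distrib_right sum_negf sum_subtractf)
    also have "\<dots> = - (\<Sum>i<N. p i * aa i) - (\<Sum>i<N. p i) * (\<Sum>k<R. q k * bb k)"
      using qs by (simp add: sum_subtractf sum_negf sum_distrib_right)
    finally show ?thesis using ps by simp
  qed
  ultimately have "mu * (- (\<Sum>i<N. p i / mu * aa i) - (\<Sum>k<R. q k * bb k))
     \<le> mu * (mu\<^sup>2 - 2 * (\<Sum>i<N. s i * p i) + 2 * mu * (\<Sum>k<R. d k * q k))"
    using key mu0 by (simp add: sum_distrib_left algebra_simps)
  then show ?thesis using mu0 by (simp add: mult_le_cancel_left_pos)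
qed

lemma comb_bound:
  fixes mu :: "nat \<Rightarrow> real" and p q :: "nat \<Rightarrow> nat \<Rightarrow> real"
  assumes mu: "\<And>j. j < R \<Longrightarrow> 0 \<le> mu j" and p: "\<And>i j. 0 \<le> p i j" and q: "\<And>k j. 0 \<le> q k j"
    and ps: "\<And>j. j < R \<Longrightarrow> (\<Sum>i<N. p i j) = mu j"
    and prow: "\<And>i. i < N \<Longrightarrow> (\<Sum>j<R. p i j / mu j) \<le> 1"
    and qs: "\<And>j. j < R \<Longrightarrow> (\<Sum>k<R. q k j) = 1"
    and qrow: "\<And>k. k < R \<Longrightarrow> (\<Sum>j<R. q k j) \<le> 1"
  shows "(\<Sum>j<R. (mu j)\<^sup>2 - 2 * (\<Sum>i<N. s i * p i j) + 2 * mu j * (\<Sum>k<R. d k * q k j))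
         \<ge> - (\<Sum>i<R. hh (s i - d i))"
proof -
  have "(\<Sum>j<R. - (\<Sum>i<N. p i j / mu j * aa i) - (\<Sum>k<R. q k j * bb k))
     \<le> (\<Sum>j<R. (mu j)\<^sup>2 - 2 * (\<Sum>i<N. s i * p i j) + 2 * mu j * (\<Sum>k<R. d k * q k j))"
    using mu p q ps qs by (intro sum_mono term_bound) auto
  moreover have "(\<Sum>j<R. - (\<Sum>i<N. p i j / mu j * aa i) - (\<Sum>k<R. q k j * bb k))
     = - (\<Sum>i<N. aa i * (\<Sum>j<R. p i j / mu j)) - (\<Sum>k<R. bb k * (\<Sum>j<R. q k j))"
  proof -
    have e1: "(\<Sum>j<R. \<Sum>i<N. p i j / mu j * aa i) = (\<Sum>i<N. aa i * (\<Sum>j<R. p i j / mu j))"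
      by (subst sum.swap) (simp add: sum_distrib_left mult.commute)
    have e2: "(\<Sum>j<R. \<Sum>k<R. q k j * bb k) = (\<Sum>k<R. bb k * (\<Sum>j<R. q k j))"
    proof -
      have "(\<Sum>j<R. \<Sum>k<R. q k j * bb k) = (\<Sum>k<R. \<Sum>j<R. q k j * bb k)" by (rule sum.swap)
      also have "\<dots> = (\<Sum>k<R. (\<Sum>j<R. q k j) * bb k)" by (simp only: sum_distrib_right)
      also have "\<dots> = (\<Sum>k<R. bb k * (\<Sum>j<R. q k j))" by (rule sum.cong) (simp_all add: mult.commute)
      finally show ?thesis .
    qed
    show ?thesis by (simp only: sum_subtractf sum_negf e1 e2)
  qed
  moreover have "(\<Sum>i<N. aa i * (\<Sum>j<R. p i j / mu j)) \<le> (\<Sum>i<N. aa i)"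
    using prow aa_nonneg by (intro sum_mono) (simp add: mult_left_le)
  moreover have "(\<Sum>k<R. bb k * (\<Sum>j<R. q k j)) \<le> (\<Sum>k<R. bb k)"
    using qrow bb_nonneg by (intro sum_mono) (simp add: mult_left_le)
  ultimately show ?thesis using dual_sum by linarith
qed

end


lemma outer_mv: "outer a b *v x = (b \<bullet> x) *\<^sub>R a"
  unfolding outer_def matrix_vector_mult_def inner_vec_def
  by (simp add: vec_eq_iff sum_distrib_left sum_distrib_right mult_ac)

lemma sum_mv: "(\<Sum>i\<in>I. X i) *v (x :: real^'b) = (\<Sum>i\<in>I. X i *v x)"
  by (induct I rule: infinite_finite_induct) (auto simp: matrix_vector_mult_add_rdistrib)

lemma scale_mv: "(c *\<^sub>R X) *v (x :: real^'b) = c *\<^sub>R (X *v x)"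
  by (simp add: scaleR_matrix_vector_assoc)

lemma eig_mv: "(\<Sum>i\<in>I. c i *\<^sub>R outer (a i) (a i)) *v x = (\<Sum>i\<in>I. (c i * (a i \<bullet> x)) *\<^sub>R a i)"
  by (simp add: sum_mv scale_mv outer_mv)

lemma eig_quad: "x \<bullet> ((\<Sum>i\<in>I. c i *\<^sub>R outer (a i) (a i)) *v x) = (\<Sum>i\<in>I. c i * (a i \<bullet> x)\<^sup>2)"
  by (simp add: eig_mv inner_sum_right power2_eq_square inner_commute mult_ac)

lemma fi_entries: "frob_inner X Y = (\<Sum>i\<in>UNIV. \<Sum>j\<in>UNIV. X $ i $ j * Y $ i $ j)"
  unfolding frob_inner_def trace_def matrix_matrix_mult_def transpose_def
  by (simp, subst sum.swap, simp)

lemma fi_sym: "frob_inner X Y = frob_inner Y X"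
  by (simp add: fi_entries mult.commute)

lemma fi_diff_left: "frob_inner (X - Y) Z = frob_inner X Z - frob_inner Y Z"
  by (simp add: fi_entries algebra_simps sum_subtractf)

lemma fi_diff_right: "frob_inner Z (X - Y) = frob_inner Z X - frob_inner Z Y"
  by (simp add: fi_entries algebra_simps sum_subtractf)

lemma fi_add_right: "frob_inner Z (X + Y) = frob_inner Z X + frob_inner Z Y"
  by (simp add: fi_entries algebra_simps sum.distrib)

lemma fi_zero_right: "frob_inner Z 0 = 0"
  by (simp add: fi_entries)

lemma fi_scale_right: "frob_inner Z (c *\<^sub>R X) = c * frob_inner Z X"
  by (simp add: fi_entries sum_distrib_left mult_ac)

lemma fi_sum_right: "frob_inner Z (\<Sum>i\<in>I. X i) = (\<Sum>i\<in>I. frob_inner Z (X i))"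
  by (induct I rule: infinite_finite_induct) (auto simp: fi_add_right fi_zero_right)

lemma fi_outer: "frob_inner X (outer a b) = a \<bullet> (X *v b)"
  unfolding fi_entries outer_def inner_vec_def matrix_vector_mult_def
  by (simp add: sum_distrib_left mult_ac)

lemma fi_eig_right: "frob_inner X (\<Sum>i\<in>I. c i *\<^sub>R outer (a i) (a i)) = (\<Sum>i\<in>I. c i * (a i \<bullet> (X *v a i)))"
  by (simp add: fi_sum_right fi_scale_right fi_outer)

lemma frob_norm_sq: "(frob_norm X)\<^sup>2 = frob_inner X X"
  unfolding frob_norm_def fi_entries
  by (simp add: sum_nonneg power2_eq_square)

lemma fi_gram: "frob_inner (Y ** transpose Y) (Y ** transpose Y) = frob_inner (transpose Y ** Y) (transpose Y ** Y)"
proof -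
  have "frob_inner (Y ** transpose Y) (Y ** transpose Y) = trace (Y ** (transpose Y ** Y ** transpose Y))"
    unfolding frob_inner_def by (simp add: matrix_transpose_mul matrix_mul_assoc)
  also have "\<dots> = trace ((transpose Y ** Y ** transpose Y) ** Y)" by (rule trace_mul_sym)
  also have "\<dots> = frob_inner (transpose Y ** Y) (transpose Y ** Y)"
    unfolding frob_inner_def by (simp add: matrix_transpose_mul matrix_mul_assoc)
  finally show ?thesis .
qed

lemma sym_mv: fixes M :: "real^'n^'n" shows "transpose M = M \<Longrightarrow> a \<bullet> (M *v b) = (M *v a) \<bullet> b"
proof -
  assume M: "transpose M = M"
  have "a \<bullet> (M *v b) = (a v* M) \<bullet> b" by (simp only: dot_lmul_matrix)
  also have "a v* M = transpose M *v a" by (simp only: transpose_matrix_vector)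
  finally show ?thesis using M by simp
qed

lemma tr_mv: fixes Y :: "real^'b^'a" shows "a \<bullet> (transpose Y *v b) = (Y *v a) \<bullet> b"
proof -
  have "a \<bullet> (transpose Y *v b) = (b v* Y) \<bullet> a" by (simp only: transpose_matrix_vector inner_commute)
  also have "\<dots> = b \<bullet> (Y *v a)" by (simp only: dot_lmul_matrix)
  finally show ?thesis by (simp only: inner_commute)
qed

lemma gram_mv: fixes Y :: "real^'b^'a" shows "a \<bullet> ((transpose Y ** Y) *v b) = (Y *v a) \<bullet> (Y *v b)"
  by (simp only: matrix_vector_mul_assoc[symmetric] tr_mv)

lemma transpose_outer: "transpose (outer a b) = outer b a"
  by (simp add: outer_def transpose_def vec_eq_iff)

lemma transpose_sum: "transpose (\<Sum>i\<in>I. X i) = (\<Sum>i\<in>I. transpose (X i))"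
  by (induct I rule: infinite_finite_induct) (auto simp: transpose_def vec_eq_iff)

lemma trace_sum: "trace (\<Sum>i\<in>I. X i) = (\<Sum>i\<in>I. trace (X i))"
  unfolding trace_def by (simp add: sum_component, subst sum.swap, simp)

lemma trace_outer: "trace (outer a a) = a \<bullet> a"
  by (simp add: trace_def outer_def inner_vec_def)

lemma cb_expand:
  fixes u :: "nat \<Rightarrow> real^'a"
  assumes "(\<Sum>i<K. outer (u i) (u i)) = mat 1"
  shows "x = (\<Sum>i<K. (u i \<bullet> x) *\<^sub>R u i)"
proof -
  have "x = (\<Sum>i<K. outer (u i) (u i)) *v x" using assms by simp
  also have "\<dots> = (\<Sum>i<K. (u i \<bullet> x) *\<^sub>R u i)" by (simp add: sum_mv outer_mv)
  finally show ?thesis .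
qed

lemma cb_norm:
  fixes u :: "nat \<Rightarrow> real^'a"
  assumes "(\<Sum>i<K. outer (u i) (u i)) = mat 1"
  shows "x \<bullet> x = (\<Sum>i<K. (u i \<bullet> x)\<^sup>2)"
proof -
  have "x \<bullet> x = x \<bullet> (\<Sum>i<K. (u i \<bullet> x) *\<^sub>R u i)" using cb_expand[OF assms] by metis
  then show ?thesis by (simp add: inner_sum_right power2_eq_square inner_commute)
qed

lemma cb_orth:
  fixes u :: "nat \<Rightarrow> real^'a"
  assumes cp: "(\<Sum>i<K. outer (u i) (u i)) = mat 1" and K: "K = CARD('a)"
    and iK: "i < K" and lK: "l < K"
  shows "u i \<bullet> u l = (if i = l then 1 else 0)"
proof -
  have tr: "(\<Sum>i<K. u i \<bullet> u i) = real K"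
    using arg_cong[OF cp, of trace] K by (simp add: trace_sum trace_outer trace_I)
  have le1: "u l \<bullet> u l \<le> 1" if "l < K" for l
  proof -
    have "(u l \<bullet> u l)\<^sup>2 \<le> (\<Sum>i<K. (u i \<bullet> u l)\<^sup>2)"
      using that by (intro member_le_sum[where f = "\<lambda>i. (u i \<bullet> u l)\<^sup>2"]) auto
    also have "\<dots> = u l \<bullet> u l" using cb_norm[OF cp] by simp
    finally have "(u l \<bullet> u l) * (u l \<bullet> u l) \<le> (u l \<bullet> u l) * 1" by (simp add: power2_eq_square)
    then show ?thesis
      by (cases "u l \<bullet> u l = 0") (auto simp: mult_le_cancel_left)
  qed
  have eq1: "u l \<bullet> u l = 1" if "l < K" for l
  proof (rule ccontr)
    assume "u l \<bullet> u l \<noteq> 1"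
    then have "u l \<bullet> u l < 1" using le1[OF that] by simp
    then have "(\<Sum>i<K. u i \<bullet> u i) < (\<Sum>i<K. 1)"
      using le1 that by (intro sum_strict_mono_ex1) auto
    then show False using tr by simp
  qed
  have off: "u i \<bullet> u l = 0" if "i < K" "l < K" "i \<noteq> l" for i l
  proof -
    have "(\<Sum>i<K. (u i \<bullet> u l)\<^sup>2) = 1" using cb_norm[OF cp, of "u l"] eq1[OF that(2)] by simp
    moreover have "(\<Sum>i<K. (u i \<bullet> u l)\<^sup>2) = (u l \<bullet> u l)\<^sup>2 + (\<Sum>i\<in>{..<K} - {l}. (u i \<bullet> u l)\<^sup>2)"
      using that by (intro sum.remove) auto
    ultimately have "(\<Sum>i\<in>{..<K} - {l}. (u i \<bullet> u l)\<^sup>2) = 0" using eq1[OF that(2)] by simp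
    then have "(u i \<bullet> u l)\<^sup>2 = 0" using that by (subst (asm) sum_nonneg_eq_0_iff) auto
    then show ?thesis by simp
  qed
  show ?thesis
  proof (cases "i = l")
    case True
    then show ?thesis using eq1[OF lK] by simp
  next
    case False
    then show ?thesis using off[OF iK lK False] by simp
  qed
qed



definition ONF :: "(nat \<Rightarrow> real^'a) \<Rightarrow> nat \<Rightarrow> bool" where
  "ONF w k \<longleftrightarrow> (\<forall>i<k. \<forall>l<k. w i \<bullet> w l = (if i = l then 1 else 0))"

lemma resid_orth:
  fixes w :: "nat \<Rightarrow> real^'a"
  assumes ON: "ONF w k" and l: "l < k"
  shows "w l \<bullet> (x - (\<Sum>j<k. (w j \<bullet> x) *\<^sub>R w j)) = 0"
proof -
  have "w l \<bullet> (\<Sum>j<k. (w j \<bullet> x) *\<^sub>R w j) = (\<Sum>j<k. (w j \<bullet> x) * (w l \<bullet> w j))"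
    by (simp add: inner_sum_right)
  also have "\<dots> = (\<Sum>j<k. if j = l then w l \<bullet> x else 0)"
    using ON l unfolding ONF_def by (intro sum.cong) auto
  also have "\<dots> = w l \<bullet> x" using l by (simp add: sum.delta)
  finally show ?thesis by (simp add: inner_diff_right)
qed

lemma exists_orth:
  fixes w :: "nat \<Rightarrow> real^'a"
  assumes ON: "ONF w k" and k: "k < CARD('a)"
  shows "\<exists>z. z \<noteq> 0 \<and> (\<forall>j<k. w j \<bullet> z = 0)"
proof (rule ccontr)
  assume H: "\<not> ?thesis"
  have "x \<in> span (w ` {..<k})" for x
  proof -
    have "x - (\<Sum>j<k. (w j \<bullet> x) *\<^sub>R w j) = 0"
      using H resid_orth[OF ON] by blast
    then have "x = (\<Sum>j<k. (w j \<bullet> x) *\<^sub>R w j)" by simp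
    also have "\<dots> \<in> span (w ` {..<k})"
      by (intro span_sum span_mul span_base) auto
    finally show ?thesis .
  qed
  then have "UNIV \<subseteq> span (w ` {..<k})" by blast
  then have "dim (UNIV :: (real^'a) set) \<le> card (w ` {..<k})"
    by (intro dim_le_card) auto
  also have "\<dots> \<le> k" using card_image_le[of "{..<k}" w] by simp
  finally show False using k by simp
qed

lemma on_complete:
  fixes w :: "nat \<Rightarrow> real^'a"
  assumes ON: "ONF w k" and k: "k = CARD('a)"
  shows "(\<Sum>j<k. outer (w j) (w j)) = mat 1"
proof -
  have ex: "x = (\<Sum>j<k. (w j \<bullet> x) *\<^sub>R w j)" for x
  proof (rule ccontr)
    define z where "z = x - (\<Sum>j<k. (w j \<bullet> x) *\<^sub>R w j)"
    assume "x \<noteq> (\<Sum>j<k. (w j \<bullet> x) *\<^sub>R w j)"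
    then have z0: "z \<noteq> 0" unfolding z_def by simp
    have zo: "w l \<bullet> z = 0" if "l < k" for l unfolding z_def by (rule resid_orth[OF ON that])
    have ww: "w i \<bullet> w l = (if i = l then 1 else 0)" if "i < k" "l < k" for i l
      using ON that unfolding ONF_def by blast
    define S where "S = insert z (w ` {..<k})"
    have po: "pairwise orthogonal S"
      unfolding S_def pairwise_def orthogonal_def
      using zo ww by (auto simp: inner_commute)
    have "0 \<notin> S" unfolding S_def using z0 ww by force
    then have "independent S" using po pairwise_orthogonal_independent by blast
    then have cS: "card S \<le> CARD('a)" using independent_bound by fastforce
    have inj: "inj_on w {..<k}"
    proof
      fix i l assume "i \<in> {..<k}" "l \<in> {..<k}" "w i = w l"
      then show "i = l" using ww[of i l] ww[of l l] by (auto split: if_splits)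
    qed
    have "z \<notin> w ` {..<k}"
    proof
      assume "z \<in> w ` {..<k}"
      then obtain l where "l < k" "z = w l" by auto
      then show False using zo[of l] ww[of l l] by simp
    qed
    then have "card S = Suc k" unfolding S_def using inj by (simp add: card_image)
    then show False using cS k by simp
  qed
  show ?thesis
    unfolding matrix_eq
  proof
    fix x :: "real^'a"
    have "(\<Sum>j<k. outer (w j) (w j)) *v x = (\<Sum>j<k. (w j \<bullet> x) *\<^sub>R w j)"
      by (simp add: sum_mv outer_mv)
    then show "(\<Sum>j<k. outer (w j) (w j)) *v x = mat 1 *v x" using ex[of x] by simp
  qed
qed

lemma bessel:
  fixes f :: "nat \<Rightarrow> real^'a"
  assumes orth: "\<And>j l. j < R \<Longrightarrow> l < R \<Longrightarrow> j \<noteq> l \<Longrightarrow> f j \<bullet> f l = 0"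
  shows "(\<Sum>j<R. (x \<bullet> f j)\<^sup>2 / (f j \<bullet> f j)) \<le> x \<bullet> x"
proof -
  define c where "c j = (x \<bullet> f j) / (f j \<bullet> f j)" for j
  define y where "y = (\<Sum>j<R. c j *\<^sub>R f j)"
  define Sm where "Sm = (\<Sum>j<R. (x \<bullet> f j)\<^sup>2 / (f j \<bullet> f j))"
  have cc: "c j * (x \<bullet> f j) = (x \<bullet> f j)\<^sup>2 / (f j \<bullet> f j)" for j
    unfolding c_def by (simp add: power2_eq_square)
  have cc2: "c j * (c j * (f j \<bullet> f j)) = (x \<bullet> f j)\<^sup>2 / (f j \<bullet> f j)" for j
    unfolding c_def by (cases "f j \<bullet> f j = 0") (simp_all add: power2_eq_square field_simps)
  have xy: "x \<bullet> y = Sm" unfolding y_def Sm_def by (simp add: inner_sum_right cc mult.commute)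
  have fy: "f j \<bullet> y = c j * (f j \<bullet> f j)" if "j < R" for j
  proof -
    have "f j \<bullet> y = (\<Sum>l<R. c l * (f j \<bullet> f l))" unfolding y_def by (simp add: inner_sum_right)
    also have "\<dots> = (\<Sum>l<R. if l = j then c j * (f j \<bullet> f j) else 0)"
      using orth that by (intro sum.cong) auto
    also have "\<dots> = c j * (f j \<bullet> f j)" using that by (simp add: sum.delta)
    finally show ?thesis .
  qed
  have yy: "y \<bullet> y = Sm"
  proof -
    have "y \<bullet> y = (\<Sum>j<R. c j * (f j \<bullet> y))" unfolding y_def by (simp add: inner_sum_left)
    also have "\<dots> = (\<Sum>j<R. (x \<bullet> f j)\<^sup>2 / (f j \<bullet> f j))"
      using fy cc2 by (intro sum.cong) auto
    finally show ?thesis unfolding Sm_def .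
  qed
  have "0 \<le> (x - y) \<bullet> (x - y)" by simp
  also have "\<dots> = x \<bullet> x - 2 * (x \<bullet> y) + y \<bullet> y"
    by (simp add: inner_diff_left inner_diff_right inner_commute)
  finally show ?thesis using xy yy unfolding Sm_def by simp
qed

lemma quad_zero:
  fixes a b :: real
  assumes H: "\<And>t. 2 * t * a + t\<^sup>2 * b \<le> 0"
  shows "a = 0"
proof -
  define c where "c = 1 + \<bar>b\<bar>"
  have c0: "0 < c" unfolding c_def by simp
  have "c\<^sup>2 * (2 * (a / c) * a + (a / c)\<^sup>2 * b) = a\<^sup>2 * (2 * c + b)"
    using c0 by (simp add: field_simps power2_eq_square)
  moreover have "c\<^sup>2 * (2 * (a / c) * a + (a / c)\<^sup>2 * b) \<le> 0"
    using H[of "a / c"] c0 by (simp add: mult_nonneg_nonpos)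
  moreover have "2 * c + b \<ge> 2" unfolding c_def by simp
  moreover have "a\<^sup>2 * 2 \<le> a\<^sup>2 * (2 * c + b)"
    using calculation(3) by (intro mult_left_mono) auto
  ultimately have "a\<^sup>2 * 2 \<le> 0" by linarith
  then show ?thesis by simp
qed



lemma spectral_step:
  fixes M :: "real^'a^'a" and w :: "nat \<Rightarrow> real^'a"
  assumes sym: "transpose M = M" and ON: "ONF w k"
    and eig: "\<And>j. j < k \<Longrightarrow> M *v w j = mu j *\<^sub>R w j" and k: "k < CARD('a)"
  shows "\<exists>x lam. x \<bullet> x = 1 \<and> (\<forall>j<k. w j \<bullet> x = 0) \<and> M *v x = lam *\<^sub>R x"
proof -
  define W where "W = (\<Inter>j\<in>{..<k}. {x::real^'a. w j \<bullet> x = 0})"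
  have W_iff: "x \<in> W \<longleftrightarrow> (\<forall>j<k. w j \<bullet> x = 0)" for x unfolding W_def by auto
  define S where "S = sphere (0::real^'a) 1 \<inter> W"
  obtain z where z: "z \<noteq> 0" "\<forall>j<k. w j \<bullet> z = 0" using exists_orth[OF ON k] by blast
  have "z /\<^sub>R norm z \<in> S" using z unfolding S_def by (auto simp: W_iff inner_scaleR_right)
  then have Sne: "S \<noteq> {}" by blast
  have "closed W" unfolding W_def by (intro closed_INT ballI closed_hyperplane)
  then have "compact S" unfolding S_def by (intro compact_Int_closed compact_sphere)
  moreover have "continuous_on S (\<lambda>x. x \<bullet> (M *v x))"
    by (intro continuous_on_inner continuous_on_id matrix_vector_mult_linear_continuous_on)
  ultimately obtain x where xS: "x \<in> S" and xmax: "\<forall>y\<in>S. y \<bullet> (M *v y) \<le> x \<bullet> (M *v x)"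
    using continuous_attains_sup[OF _ Sne] by blast
  define lam where "lam = x \<bullet> (M *v x)"
  have xW: "x \<in> W" and xn: "norm x = 1" using xS unfolding S_def by auto
  have xx: "x \<bullet> x = 1" using xn by (simp add: norm_eq_1)
  have c1: "y \<bullet> (M *v y) \<le> lam * (y \<bullet> y)" if "y \<in> W" for y
  proof (cases "y = 0")
    case True then show ?thesis by simp
  next
    case False
    then have "y /\<^sub>R norm y \<in> S" using that unfolding S_def by (auto simp: W_iff inner_scaleR_right)
    then have "(y /\<^sub>R norm y) \<bullet> (M *v (y /\<^sub>R norm y)) \<le> lam" using xmax unfolding lam_def by blast
    then have "(y \<bullet> (M *v y)) / (norm y)\<^sup>2 \<le> lam"
      by (simp add: matrix_vector_mult_scaleR power2_eq_square divide_inverse mult_ac)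
    then have "y \<bullet> (M *v y) \<le> lam * (norm y)\<^sup>2" using False by (simp add: divide_le_eq)
    then show ?thesis by (simp add: power2_norm_eq_inner)
  qed
  define z0 where "z0 = M *v x - lam *\<^sub>R x"
  have c2: "y \<bullet> z0 = 0" if yW: "y \<in> W" for y
  proof (rule quad_zero)
    fix t :: real
    have "x + t *\<^sub>R y \<in> W" using xW yW unfolding W_iff by (simp add: inner_add_right inner_scaleR_right)
    then have le: "(x + t *\<^sub>R y) \<bullet> (M *v (x + t *\<^sub>R y)) \<le> lam * ((x + t *\<^sub>R y) \<bullet> (x + t *\<^sub>R y))"
      by (rule c1)
    have xy: "x \<bullet> (M *v y) = y \<bullet> (M *v x)" using sym_mv[OF sym, of x y] by (simp add: inner_commute)
    have e1: "(x + t *\<^sub>R y) \<bullet> (M *v (x + t *\<^sub>R y)) = lam + 2 * t * (y \<bullet> (M *v x)) + t\<^sup>2 * (y \<bullet> (M *v y))"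
      unfolding lam_def
      by (simp add: matrix_vector_right_distrib matrix_vector_mult_scaleR inner_add_left inner_add_right
          xy power2_eq_square algebra_simps)
    have e2: "(x + t *\<^sub>R y) \<bullet> (x + t *\<^sub>R y) = 1 + 2 * t * (x \<bullet> y) + t\<^sup>2 * (y \<bullet> y)"
      using xx by (simp add: inner_add_left inner_add_right inner_commute power2_eq_square algebra_simps)
    have e3: "y \<bullet> z0 = y \<bullet> (M *v x) - lam * (x \<bullet> y)"
      unfolding z0_def by (simp add: inner_diff_right inner_commute)
    have le': "lam + 2 * t * (y \<bullet> (M *v x)) + t\<^sup>2 * (y \<bullet> (M *v y))
        \<le> lam * (1 + 2 * t * (x \<bullet> y) + t\<^sup>2 * (y \<bullet> y))"
      using le unfolding e1 e2 .
    have "2 * t * (y \<bullet> z0) + t\<^sup>2 * (y \<bullet> (M *v y) - lam * (y \<bullet> y))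
      = (lam + 2 * t * (y \<bullet> (M *v x)) + t\<^sup>2 * (y \<bullet> (M *v y)))
        - lam * (1 + 2 * t * (x \<bullet> y) + t\<^sup>2 * (y \<bullet> y))"
      unfolding e3 by (simp add: algebra_simps)
    then show "2 * t * (y \<bullet> z0) + t\<^sup>2 * (y \<bullet> (M *v y) - lam * (y \<bullet> y)) \<le> 0"
      using le' by linarith
  qed
  have z0W: "z0 \<in> W" unfolding W_iff
  proof (intro allI impI)
    fix j assume j: "j < k"
    have "w j \<bullet> (M *v x) = (M *v w j) \<bullet> x" by (rule sym_mv[OF sym])
    also have "\<dots> = mu j * (w j \<bullet> x)" using eig[OF j] by simp
    finally show "w j \<bullet> z0 = 0" using xW j unfolding W_iff z0_def by (simp add: inner_diff_right)
  qed
  have "z0 \<bullet> z0 = 0" using c2[OF z0W] .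
  then have "M *v x = lam *\<^sub>R x" unfolding z0_def by simp
  then show ?thesis using xx xW unfolding W_iff by blast
qed

lemma spectral_k:
  fixes M :: "real^'a^'a"
  assumes sym: "transpose M = M"
  shows "k \<le> CARD('a) \<Longrightarrow> \<exists>w mu. ONF w k \<and> (\<forall>j<k. M *v w j = mu j *\<^sub>R w j)"
proof (induction k)
  case 0
  then show ?case by (auto simp: ONF_def)
next
  case (Suc k)
  then obtain w mu where ON: "ONF w k" and eig: "\<forall>j<k. M *v w j = mu j *\<^sub>R w j" by auto
  obtain x lam where x: "x \<bullet> x = 1" "\<forall>j<k. w j \<bullet> x = 0" "M *v x = lam *\<^sub>R x"
    using spectral_step[OF sym ON, of mu] eig Suc.prems by auto
  define w' where "w' = w(k := x)"
  define mu' where "mu' = mu(k := lam)"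
  have "ONF w' (Suc k)"
    unfolding ONF_def w'_def
  proof (intro allI impI)
    fix i l assume "i < Suc k" "l < Suc k"
    then show "(w(k := x)) i \<bullet> (w(k := x)) l = (if i = l then 1 else 0)"
      using ON x unfolding ONF_def by (auto simp: less_Suc_eq inner_commute)
  qed
  moreover have "\<forall>j<Suc k. M *v w' j = mu' j *\<^sub>R w' j"
    using eig x unfolding w'_def mu'_def by (auto simp: less_Suc_eq)
  ultimately show ?case by blast
qed

lemma spectral:
  fixes M :: "real^'a^'a"
  assumes sym: "transpose M = M"
  shows "\<exists>w mu. ONF w CARD('a) \<and> (\<Sum>j<CARD('a). outer (w j) (w j)) = mat 1
           \<and> (\<forall>j<CARD('a). M *v w j = mu j *\<^sub>R w j)"
  using spectral_k[OF sym, of "CARD('a)"] on_complete by blast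



lemma mv_sum: "X *v (\<Sum>i\<in>I. f i) = (\<Sum>i\<in>I. X *v (f i :: real^'b))"
  by (induct I rule: infinite_finite_induct) (auto simp: matrix_vector_right_distrib)

lemma eig_apply:
  fixes u :: "nat \<Rightarrow> real^'a"
  assumes ON: "ONF u K" and i: "i < K"
  shows "(\<Sum>l<K. c l *\<^sub>R outer (u l) (u l)) *v u i = c i *\<^sub>R u i"
proof -
  have "(\<Sum>l<K. c l *\<^sub>R outer (u l) (u l)) *v u i = (\<Sum>l<K. (c l * (u l \<bullet> u i)) *\<^sub>R u l)"
    by (rule eig_mv)
  also have "\<dots> = (\<Sum>l<K. if l = i then c i *\<^sub>R u i else 0)"
    using ON i unfolding ONF_def by (intro sum.cong) auto
  also have "\<dots> = c i *\<^sub>R u i" using i by (simp add: sum.delta)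
  finally show ?thesis .
qed

lemma ONF_dot: "ONF u K \<Longrightarrow> i < K \<Longrightarrow> l < K \<Longrightarrow> u i \<bullet> u l = (if i = l then 1 else 0)"
  unfolding ONF_def by blast

lemma expansion:
  fixes A :: "real^'n^'n" and B :: "real^'r^'r" and Y :: "real^'r^'n"
    and s d mu :: "nat \<Rightarrow> real" and u :: "nat \<Rightarrow> real^'n" and v w :: "nat \<Rightarrow> real^'r"
  assumes A_eig: "A = (\<Sum>i<CARD('n). s i *\<^sub>R outer (u i) (u i))"
    and uON: "ONF u CARD('n)"
    and B_eig: "B = (\<Sum>i<CARD('r). d i *\<^sub>R outer (v i) (v i))"
    and wON: "ONF w CARD('r)"
    and w_id: "(\<Sum>j<CARD('r). outer (w j) (w j)) = mat 1"
    and eig: "\<And>j. j < CARD('r) \<Longrightarrow> (transpose Y ** Y) *v w j = mu j *\<^sub>R w j"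
  shows "(frob_norm (A - Y ** transpose Y))\<^sup>2 + 2 * frob_inner B (transpose Y ** Y)
    = (\<Sum>i<CARD('n). (s i)\<^sup>2) + (\<Sum>j<CARD('r). (mu j)\<^sup>2
        - 2 * (\<Sum>i<CARD('n). s i * (u i \<bullet> (Y *v w j))\<^sup>2)
        + 2 * mu j * (\<Sum>k<CARD('r). d k * (v k \<bullet> w j)\<^sup>2))"
proof -
  define N where "N = CARD('n)"
  define R where "R = CARD('r)"
  define P where "P = Y ** transpose Y"
  define M where "M = transpose Y ** Y"
  have Mdec: "M = (\<Sum>j<R. mu j *\<^sub>R outer (w j) (w j))"
    unfolding matrix_eq
  proof
    fix x
    have "M *v x = M *v (\<Sum>j<R. (w j \<bullet> x) *\<^sub>R w j)"
      using cb_expand[OF w_id, of x] unfolding R_def by metis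
    also have "\<dots> = (\<Sum>j<R. (mu j * (w j \<bullet> x)) *\<^sub>R w j)"
      unfolding mv_sum matrix_vector_mult_scaleR
      using eig unfolding M_def R_def by (intro sum.cong) auto
    also have "\<dots> = (\<Sum>j<R. mu j *\<^sub>R outer (w j) (w j)) *v x" by (rule eig_mv[symmetric])
    finally show "M *v x = (\<Sum>j<R. mu j *\<^sub>R outer (w j) (w j)) *v x" .
  qed
  have T1: "frob_inner A A = (\<Sum>i<N. (s i)\<^sup>2)"
  proof -
    have "frob_inner A A = (\<Sum>i<N. s i * (u i \<bullet> (A *v u i)))"
      by (subst (2) A_eig) (simp add: fi_eig_right N_def)
    also have "\<dots> = (\<Sum>i<N. (s i)\<^sup>2)"
    proof (intro sum.cong refl)
      fix i assume "i \<in> {..<N}"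
      then have "A *v u i = s i *\<^sub>R u i" using eig_apply[OF uON] A_eig unfolding N_def by auto
      then show "s i * (u i \<bullet> (A *v u i)) = (s i)\<^sup>2"
        using ONF_dot[OF uON] \<open>i \<in> {..<N}\<close> unfolding N_def by (simp add: power2_eq_square)
    qed
    finally show ?thesis .
  qed
  have T2: "frob_inner A P = (\<Sum>j<R. \<Sum>i<N. s i * (u i \<bullet> (Y *v w j))\<^sup>2)"
  proof -
    have "frob_inner A P = frob_inner P A" by (rule fi_sym)
    also have "\<dots> = (\<Sum>i<N. s i * (u i \<bullet> (P *v u i)))"
      by (subst A_eig) (simp add: fi_eig_right N_def)
    also have "\<dots> = (\<Sum>i<N. s i * (\<Sum>j<R. (u i \<bullet> (Y *v w j))\<^sup>2))"
    proof (intro sum.cong refl arg_cong2[where f = "(*)"])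
      fix i
      have "u i \<bullet> (P *v u i) = u i \<bullet> (transpose (transpose Y) *v (transpose Y *v u i))"
        unfolding P_def by (simp only: matrix_vector_mul_assoc transpose_transpose)
      also have "\<dots> = (transpose Y *v u i) \<bullet> (transpose Y *v u i)" by (rule tr_mv)
      also have "\<dots> = (\<Sum>j<R. (w j \<bullet> (transpose Y *v u i))\<^sup>2)"
        using cb_norm[OF w_id] unfolding R_def by blast
      also have "\<dots> = (\<Sum>j<R. (u i \<bullet> (Y *v w j))\<^sup>2)"
        by (intro sum.cong refl) (metis tr_mv inner_commute)
      finally show "u i \<bullet> (P *v u i) = (\<Sum>j<R. (u i \<bullet> (Y *v w j))\<^sup>2)" .
    qed
    also have "\<dots> = (\<Sum>i<N. \<Sum>j<R. s i * (u i \<bullet> (Y *v w j))\<^sup>2)" by (simp add: sum_distrib_left)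
    also have "\<dots> = (\<Sum>j<R. \<Sum>i<N. s i * (u i \<bullet> (Y *v w j))\<^sup>2)" by (rule sum.swap)
    finally show ?thesis .
  qed
  have T3: "frob_inner P P = (\<Sum>j<R. (mu j)\<^sup>2)"
  proof -
    have "frob_inner P P = frob_inner M M" unfolding P_def M_def by (rule fi_gram)
    also have "\<dots> = (\<Sum>j<R. mu j * (w j \<bullet> (M *v w j)))"
      by (subst (2) Mdec) (simp add: fi_eig_right)
    also have "\<dots> = (\<Sum>j<R. (mu j)\<^sup>2)"
      using eig ONF_dot[OF wON] unfolding M_def R_def by (intro sum.cong) (auto simp: power2_eq_square)
    finally show ?thesis .
  qed
  have T4: "frob_inner B M = (\<Sum>j<R. mu j * (\<Sum>k<R. d k * (v k \<bullet> w j)\<^sup>2))"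
  proof -
    have "frob_inner B M = (\<Sum>j<R. mu j * (w j \<bullet> (B *v w j)))"
      by (subst Mdec) (simp add: fi_eig_right)
    also have "\<dots> = (\<Sum>j<R. mu j * (\<Sum>k<R. d k * (v k \<bullet> w j)\<^sup>2))"
      unfolding B_eig eig_quad R_def ..
    finally show ?thesis .
  qed
  have "(frob_norm (A - P))\<^sup>2 = frob_inner A A - 2 * frob_inner A P + frob_inner P P"
    unfolding frob_norm_sq fi_diff_left fi_diff_right using fi_sym[of P A] by simp
  then have "(frob_norm (A - P))\<^sup>2 + 2 * frob_inner B M
     = (\<Sum>i<N. (s i)\<^sup>2) - 2 * (\<Sum>j<R. \<Sum>i<N. s i * (u i \<bullet> (Y *v w j))\<^sup>2) + (\<Sum>j<R. (mu j)\<^sup>2)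
       + 2 * (\<Sum>j<R. mu j * (\<Sum>k<R. d k * (v k \<bullet> w j)\<^sup>2))"
    using T1 T2 T3 T4 by simp
  also have "\<dots> = (\<Sum>i<N. (s i)\<^sup>2) + (\<Sum>j<R. (mu j)\<^sup>2
        - 2 * (\<Sum>i<N. s i * (u i \<bullet> (Y *v w j))\<^sup>2)
        + 2 * mu j * (\<Sum>k<R. d k * (v k \<bullet> w j)\<^sup>2))"
    by (simp add: sum.distrib sum_subtractf sum_distrib_left mult.assoc)
  finally show ?thesis unfolding P_def M_def N_def R_def .
qed



theorem theorem19:
  fixes A :: "real ^ 'n ^ 'n" and B :: "real ^ 'r ^ 'r"
    and s :: "nat \<Rightarrow> real" and u :: "nat \<Rightarrow> real ^ 'n"
    and d :: "nat \<Rightarrow> real" and v :: "nat \<Rightarrow> real ^ 'r"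
  assumes rn: "CARD('r) \<le> CARD('n)"
    and A_psd: "sym_psd A" and B_psd: "sym_psd B"
    and A_eig: "A = (\<Sum>i<CARD('n). s i *\<^sub>R outer (u i) (u i))"
    and u_id: "(\<Sum>i<CARD('n). outer (u i) (u i)) = mat 1"
    and s_dec: "\<And>i j. i \<le> j \<Longrightarrow> j < CARD('n) \<Longrightarrow> s j \<le> s i"
    and s_nonneg: "\<And>i. i < CARD('n) \<Longrightarrow> 0 \<le> s i"
    and B_eig: "B = (\<Sum>i<CARD('r). d i *\<^sub>R outer (v i) (v i))"
    and v_id: "(\<Sum>i<CARD('r). outer (v i) (v i)) = mat 1"
    and d_inc: "\<And>i j. i \<le> j \<Longrightarrow> j < CARD('r) \<Longrightarrow> d i \<le> d j"
    and d_nonneg: "\<And>i. i < CARD('r) \<Longrightarrow> 0 \<le> d i"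
  shows "(\<forall>Y :: real ^ 'r ^ 'n.
            (\<Sum>i<CARD('n). (s i)\<^sup>2) - (\<Sum>i<CARD('r). (pos_part (s i - d i))\<^sup>2)
            \<le> (frob_norm (A - Y ** transpose Y))\<^sup>2 + 2 * frob_inner B (transpose Y ** Y))
       \<and> (let Ystar = (\<Sum>i<CARD('r). sqrt (pos_part (s i - d i)) *\<^sub>R outer (u i) (v i))
          in (frob_norm (A - Ystar ** transpose Ystar))\<^sup>2 + 2 * frob_inner B (transpose Ystar ** Ystar)
             = (\<Sum>i<CARD('n). (s i)\<^sup>2) - (\<Sum>i<CARD('r). (pos_part (s i - d i))\<^sup>2))"
proof -
  define N where "N = CARD('n)"
  define R where "R = CARD('r)"
  have uON: "ONF u N" unfolding ONF_def N_def using cb_orth[OF u_id refl] by blast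
  have vON: "ONF v R" unfolding ONF_def R_def using cb_orth[OF v_id refl] by blast
  interpret D: dualsetup N R s d
    using rn s_dec s_nonneg d_inc unfolding N_def R_def by unfold_locales auto
  have hh_eq: "(\<Sum>i<R. (pos_part (s i - d i))\<^sup>2) = (\<Sum>i<R. hh (s i - d i))"
    by (simp add: hh_def)
  have part1: "(\<Sum>i<N. (s i)\<^sup>2) - (\<Sum>i<R. (pos_part (s i - d i))\<^sup>2)
            \<le> (frob_norm (A - Y ** transpose Y))\<^sup>2 + 2 * frob_inner B (transpose Y ** Y)"
    for Y :: "real ^ 'r ^ 'n"
  proof -
    define M where "M = transpose Y ** Y"
    have "transpose M = M" unfolding M_def by (simp add: matrix_transpose_mul)
    then obtain w mu where wON: "ONF w R" and w_id: "(\<Sum>j<R. outer (w j) (w j)) = mat 1"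
      and eig: "\<And>j. j < R \<Longrightarrow> M *v w j = mu j *\<^sub>R w j"
      using spectral[of M] unfolding R_def by blast
    have exp: "(frob_norm (A - Y ** transpose Y))\<^sup>2 + 2 * frob_inner B (transpose Y ** Y)
      = (\<Sum>i<N. (s i)\<^sup>2) + (\<Sum>j<R. (mu j)\<^sup>2
        - 2 * (\<Sum>i<N. s i * (u i \<bullet> (Y *v w j))\<^sup>2)
        + 2 * mu j * (\<Sum>k<R. d k * (v k \<bullet> w j)\<^sup>2))"
      unfolding N_def R_def
      by (rule expansion[OF A_eig uON[unfolded N_def] B_eig wON[unfolded R_def] w_id[unfolded R_def]
            eig[unfolded M_def R_def]])
    have ff: "(Y *v w j) \<bullet> (Y *v w l) = (if j = l then mu j else 0)" if "j < R" "l < R" for j l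
    proof -
      have "(Y *v w j) \<bullet> (Y *v w l) = w j \<bullet> (M *v w l)" unfolding M_def by (rule gram_mv[symmetric])
      also have "\<dots> = mu l * (w j \<bullet> w l)" using eig[OF that(2)] by simp
      finally show ?thesis using ONF_dot[OF wON that] by simp
    qed
    have mu0: "0 \<le> mu j" if "j < R" for j using ff[OF that that] by (metis inner_ge_zero)
    have ps: "(\<Sum>i<N. (u i \<bullet> (Y *v w j))\<^sup>2) = mu j" if "j < R" for j
      using cb_norm[OF u_id, of "Y *v w j"] ff[OF that that] unfolding N_def by simp
    have prow: "(\<Sum>j<R. (u i \<bullet> (Y *v w j))\<^sup>2 / mu j) \<le> 1" if "i < N" for i
    proof -
      have "(\<Sum>j<R. (u i \<bullet> (Y *v w j))\<^sup>2 / ((Y *v w j) \<bullet> (Y *v w j))) \<le> u i \<bullet> u i"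
        using ff by (intro bessel) auto
      moreover have "(\<Sum>j<R. (u i \<bullet> (Y *v w j))\<^sup>2 / ((Y *v w j) \<bullet> (Y *v w j)))
          = (\<Sum>j<R. (u i \<bullet> (Y *v w j))\<^sup>2 / mu j)"
        using ff by (intro sum.cong) auto
      ultimately show ?thesis using ONF_dot[OF uON that that] by simp
    qed
    have qs: "(\<Sum>k<R. (v k \<bullet> w j)\<^sup>2) = 1" if "j < R" for j
      using cb_norm[OF v_id, of "w j"] ONF_dot[OF wON that that] unfolding R_def by simp
    have qrow: "(\<Sum>j<R. (v k \<bullet> w j)\<^sup>2) \<le> 1" if "k < R" for k
    proof -
      have "(\<Sum>j<R. (v k \<bullet> w j)\<^sup>2) = (\<Sum>j<R. (w j \<bullet> v k)\<^sup>2)" by (simp add: inner_commute)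
      also have "\<dots> = v k \<bullet> v k" using cb_norm[OF w_id, of "v k"] by simp
      finally show ?thesis using ONF_dot[OF vON that that] by simp
    qed
    have "- (\<Sum>i<R. hh (s i - d i)) \<le> (\<Sum>j<R. (mu j)\<^sup>2
        - 2 * (\<Sum>i<N. s i * (u i \<bullet> (Y *v w j))\<^sup>2)
        + 2 * mu j * (\<Sum>k<R. d k * (v k \<bullet> w j)\<^sup>2))"
      by (rule D.comb_bound[where p = "\<lambda>i j. (u i \<bullet> (Y *v w j))\<^sup>2" and q = "\<lambda>k j. (v k \<bullet> w j)\<^sup>2"])
         (use mu0 ps prow qs qrow in auto)
    then show ?thesis using exp hh_eq unfolding N_def R_def by simp
  qed
  define c where "c i = pos_part (s i - d i)" for i
  define sg where "sg i = sqrt (c i)" for i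
  define Ys where "Ys = (\<Sum>i<R. sg i *\<^sub>R outer (u i) (v i))"
  have c0: "0 \<le> c i" for i unfolding c_def pos_part_def by simp
  have sg2: "sg i * sg i = c i" for i unfolding sg_def using c0 by simp
  have uu: "u i \<bullet> u l = (if i = l then 1 else 0)" if "i < R" "l < R" for i l
    using ONF_dot[OF uON] that rn unfolding N_def R_def by auto
  have Ysv: "Ys *v v j = sg j *\<^sub>R u j" if "j < R" for j
  proof -
    have "Ys *v v j = (\<Sum>i<R. (sg i * (v i \<bullet> v j)) *\<^sub>R u i)"
      unfolding Ys_def by (simp add: sum_mv scale_mv outer_mv)
    also have "\<dots> = (\<Sum>i<R. if i = j then sg j *\<^sub>R u j else 0)"
      using ONF_dot[OF vON _ that] by (intro sum.cong) auto
    finally show ?thesis using that by (simp add: sum.delta)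
  qed
  have YsT: "transpose Ys *v u j = sg j *\<^sub>R v j" if "j < R" for j
  proof -
    have "transpose Ys = (\<Sum>i<R. sg i *\<^sub>R outer (v i) (u i))"
      unfolding Ys_def by (simp add: transpose_sum transpose_scalar transpose_outer)
    then have "transpose Ys *v u j = (\<Sum>i<R. (sg i * (u i \<bullet> u j)) *\<^sub>R v i)"
      by (simp add: sum_mv scale_mv outer_mv)
    also have "\<dots> = (\<Sum>i<R. if i = j then sg j *\<^sub>R v j else 0)"
      using uu[OF _ that] by (intro sum.cong) auto
    finally show ?thesis using that by (simp add: sum.delta)
  qed
  have Meig: "(transpose Ys ** Ys) *v v j = c j *\<^sub>R v j" if "j < R" for j
  proof -
    have "(transpose Ys ** Ys) *v v j = transpose Ys *v (Ys *v v j)" by (simp only: matrix_vector_mul_assoc)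
    also have "\<dots> = (sg j * sg j) *\<^sub>R v j" using Ysv[OF that] YsT[OF that] by (simp add: matrix_vector_mult_scaleR)
    finally show ?thesis using sg2 by simp
  qed
  have exp2: "(frob_norm (A - Ys ** transpose Ys))\<^sup>2 + 2 * frob_inner B (transpose Ys ** Ys)
      = (\<Sum>i<N. (s i)\<^sup>2) + (\<Sum>j<R. (c j)\<^sup>2
        - 2 * (\<Sum>i<N. s i * (u i \<bullet> (Ys *v v j))\<^sup>2)
        + 2 * c j * (\<Sum>k<R. d k * (v k \<bullet> v j)\<^sup>2))"
    unfolding N_def R_def
    by (rule expansion[OF A_eig uON[unfolded N_def] B_eig vON[unfolded R_def] v_id
          Meig[unfolded R_def]])
  have termj: "(c j)\<^sup>2 - 2 * (\<Sum>i<N. s i * (u i \<bullet> (Ys *v v j))\<^sup>2)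
        + 2 * c j * (\<Sum>k<R. d k * (v k \<bullet> v j)\<^sup>2) = - (pos_part (s j - d j))\<^sup>2" if j: "j < R" for j
  proof -
    have jN: "j < N" using j rn unfolding N_def R_def by simp
    have "(\<Sum>i<N. s i * (u i \<bullet> (Ys *v v j))\<^sup>2) = (\<Sum>i<N. if i = j then s j * c j else 0)"
    proof (intro sum.cong refl)
      fix i assume "i \<in> {..<N}"
      then have "u i \<bullet> u j = (if i = j then 1 else 0)" using ONF_dot[OF uON _ jN] by simp
      then show "s i * (u i \<bullet> (Ys *v v j))\<^sup>2 = (if i = j then s j * c j else 0)"
        using Ysv[OF j] sg2[of j] by (simp add: power2_eq_square)
    qed
    also have "\<dots> = s j * c j" using jN by (simp add: sum.delta)
    finally have e1: "(\<Sum>i<N. s i * (u i \<bullet> (Ys *v v j))\<^sup>2) = s j * c j" .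
    have "(\<Sum>k<R. d k * (v k \<bullet> v j)\<^sup>2) = (\<Sum>k<R. if k = j then d j else 0)"
      using ONF_dot[OF vON _ j] by (intro sum.cong) auto
    also have "\<dots> = d j" using j by (simp add: sum.delta)
    finally have e2: "(\<Sum>k<R. d k * (v k \<bullet> v j)\<^sup>2) = d j" .
    show ?thesis unfolding e1 e2 c_def pos_part_def
      by (cases "s j - d j \<le> 0") (simp_all add: power2_eq_square algebra_simps max_def)
  qed
  have part2: "(frob_norm (A - Ys ** transpose Ys))\<^sup>2 + 2 * frob_inner B (transpose Ys ** Ys)
      = (\<Sum>i<N. (s i)\<^sup>2) - (\<Sum>i<R. (pos_part (s i - d i))\<^sup>2)"
    unfolding exp2 using termj by (simp add: sum_negf)
  show ?thesis
    using part1 part2 unfolding Let_def Ys_def sg_def c_def N_def R_def by blast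
qed


end
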